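(* Let $B$ be a locally compact Hausdorff space and let $(X,r)$ be a $B$-space. Then the anchor map $r\colon X\to B$ extends uniquely to a proper continuous map $\beta_Br\colon\beta_BX\to B$ with $\beta_Br\circ i=r$, where $i\colon X\to\beta_BX$ is the canonical map.
   Context: A $B$-space is a topological space $X$ with a continuous map $r\colon X\to B$. Let $H_X\subseteq\mathrm{C_b}(X)$ be the closed linear span of products $g\cdot(h\circ r)$ with $g\in\mathrm{C_b}(X)$, $h\in\mathrm C_0(B)$, a commutative C*-algebra. The relative Stone--Čech compactification $\beta_BX$ is the spectrum of $H_X$, and $i\colon X\to\beta_BX$ maps $x$ to the character $\varphi\mapsto\varphi(x)$. *)

theory Defs
  imports "HOL-Analysis.Analysis"
begin

text \<open>Elements of function algebras on a space are represented as complex-valued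
functions that vanish outside the carrier (so that equality of elements is
equality on the space).\<close>

definition Cb :: "'a topology \<Rightarrow> ('a \<Rightarrow> complex) set" where
  "Cb X = {f. continuous_map X euclidean f \<and>
              (\<exists>M. \<forall>x\<in>topspace X. norm (f x) \<le> M) \<and>
              (\<forall>x. x \<notin> topspace X \<longrightarrow> f x = 0)}"

definition C0 :: "'b topology \<Rightarrow> ('b \<Rightarrow> complex) set" where
  "C0 B = {h. continuous_map B euclidean h \<and>
              (\<forall>e>0. compactin B {b \<in> topspace B. e \<le> norm (h b)}) \<and>
              (\<forall>b. b \<notin> topspace B \<longrightarrow> h b = 0)}"

definition HX_gen :: "'a topology \<Rightarrow> 'b topology \<Rightarrow> ('a \<Rightarrow> 'b) \<Rightarrow> ('a \<Rightarrow> complex) set" where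
  "HX_gen X B r = {(\<lambda>x. g x * h (r x)) | g h. g \<in> Cb X \<and> h \<in> C0 B}"

inductive_set HX_span :: "'a topology \<Rightarrow> 'b topology \<Rightarrow> ('a \<Rightarrow> 'b) \<Rightarrow> ('a \<Rightarrow> complex) set"
  for X B r where
  zero: "(\<lambda>x. 0) \<in> HX_span X B r"
| add: "s \<in> HX_span X B r \<Longrightarrow> p \<in> HX_gen X B r \<Longrightarrow> (c::complex) \<noteq> 0 \<Longrightarrow>
          (\<lambda>x. s x + c * p x) \<in> HX_span X B r"

definition HX :: "'a topology \<Rightarrow> 'b topology \<Rightarrow> ('a \<Rightarrow> 'b) \<Rightarrow> ('a \<Rightarrow> complex) set" where
  "HX X B r = {f \<in> Cb X. \<forall>e>0. \<exists>s\<in>HX_span X B r. \<forall>x\<in>topspace X. norm (f x - s x) \<le> e}"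

definition characters :: "('a \<Rightarrow> complex) set \<Rightarrow> (('a \<Rightarrow> complex) \<Rightarrow> complex) set" where
  "characters A = {\<phi> \<in> extensional A.
      (\<forall>f\<in>A. \<forall>g\<in>A. \<phi> (\<lambda>x. f x + g x) = \<phi> f + \<phi> g) \<and>
      (\<forall>f\<in>A. \<forall>c. \<phi> (\<lambda>x. c * f x) = c * \<phi> f) \<and>
      (\<forall>f\<in>A. \<forall>g\<in>A. \<phi> (\<lambda>x. f x * g x) = \<phi> f * \<phi> g) \<and>
      (\<exists>f\<in>A. \<phi> f \<noteq> 0)}"

text \<open>Spectrum with the weak-* topology (topology of pointwise convergence on A).\<close>
definition spectrum_top :: "('a \<Rightarrow> complex) set \<Rightarrow> (('a \<Rightarrow> complex) \<Rightarrow> complex) topology" where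
  "spectrum_top A = subtopology (product_topology (\<lambda>_. euclidean) A) (characters A)"

definition betaB :: "'a topology \<Rightarrow> 'b topology \<Rightarrow> ('a \<Rightarrow> 'b) \<Rightarrow> (('a \<Rightarrow> complex) \<Rightarrow> complex) topology" where
  "betaB X B r = spectrum_top (HX X B r)"

definition betaB_i :: "'a topology \<Rightarrow> 'b topology \<Rightarrow> ('a \<Rightarrow> 'b) \<Rightarrow> 'a \<Rightarrow> (('a \<Rightarrow> complex) \<Rightarrow> complex)" where
  "betaB_i X B r x = (\<lambda>f\<in>HX X B r. f x)"

end

theory Submission
  imports Defs
begin


lemma cm_mult:
  fixes f g :: "'a \<Rightarrow> 'b::real_normed_algebra"
  shows "continuous_map X euclidean f \<Longrightarrow> continuous_map X euclidean g \<Longrightarrow>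
    continuous_map X euclidean (\<lambda>x. f x * g x)"
  by (simp add: continuous_map_atin tendsto_mult)

lemma cm_cnj:
  "continuous_map X euclidean f \<Longrightarrow> continuous_map X euclidean (\<lambda>x. cnj (f x))"
  by (simp add: continuous_map_atin tendsto_cnj)

lemma cm_Re:
  "continuous_map X euclidean f \<Longrightarrow> continuous_map X euclidean (\<lambda>x. complex_of_real (Re (f x)))"
  by (simp add: continuous_map_atin tendsto_Re tendsto_of_real)

lemma cm_Im:
  "continuous_map X euclidean f \<Longrightarrow> continuous_map X euclidean (\<lambda>x. complex_of_real (Im (f x)))"
  by (simp add: continuous_map_atin tendsto_Im tendsto_of_real)

lemma cm_inv:
  fixes f :: "'a \<Rightarrow> complex"
  assumes "continuous_map X euclidean f" "\<And>x. x \<in> topspace X \<Longrightarrow> f x \<noteq> 0"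
  shows "continuous_map X euclidean (\<lambda>x. inverse (f x))"
  using assms by (simp add: continuous_map_atin tendsto_inverse)

lemma cm_if:
  assumes "continuous_map X euclidean g"
  shows "continuous_map X euclidean (\<lambda>x. if x \<in> topspace X then g x else (0::'b::real_normed_vector))"
  by (rule continuous_map_eq[OF assms]) auto

lemma CbI:
  assumes "continuous_map X euclidean f" "\<And>x. x \<in> topspace X \<Longrightarrow> norm (f x) \<le> M"
    "\<And>x. x \<notin> topspace X \<Longrightarrow> f x = 0"
  shows "f \<in> Cb X"
  using assms unfolding Cb_def by blast

lemma CbD:
  assumes "f \<in> Cb X"
  shows "continuous_map X euclidean f" "\<And>x. x \<notin> topspace X \<Longrightarrow> f x = 0"
  using assms unfolding Cb_def by blast+

lemma Cb_bound:
  assumes "f \<in> Cb X"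
  obtains M where "M \<ge> 0" "\<And>x. norm (f x) \<le> M"
proof -
  obtain M where M: "\<forall>x\<in>topspace X. norm (f x) \<le> M" using assms unfolding Cb_def by blast
  show ?thesis
  proof (rule that[of "max M 0"])
    fix x show "norm (f x) \<le> max M 0"
      using M CbD(2)[OF assms, of x] by (cases "x \<in> topspace X") auto
  qed simp
qed

lemma Cb_mult: "f \<in> Cb X \<Longrightarrow> g \<in> Cb X \<Longrightarrow> (\<lambda>x. f x * g x) \<in> Cb X"
proof -
  assume f: "f \<in> Cb X" and g: "g \<in> Cb X"
  obtain M1 where M1: "M1 \<ge> 0" "\<And>x. norm (f x) \<le> M1" using Cb_bound[OF f] by blast
  obtain M2 where M2: "M2 \<ge> 0" "\<And>x. norm (g x) \<le> M2" using Cb_bound[OF g] by blast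
  show ?thesis
  proof (rule CbI[where M="M1*M2"])
    show "continuous_map X euclidean (\<lambda>x. f x * g x)" by (rule cm_mult[OF CbD(1)[OF f] CbD(1)[OF g]])
    fix x show "norm (f x * g x) \<le> M1 * M2"
      by (simp add: norm_mult M1 M2 mult_mono')
  qed (simp add: CbD(2)[OF f])
qed

lemma Cb_add: "f \<in> Cb X \<Longrightarrow> g \<in> Cb X \<Longrightarrow> (\<lambda>x. f x + g x) \<in> Cb X"
proof -
  assume f: "f \<in> Cb X" and g: "g \<in> Cb X"
  obtain M1 where M1: "M1 \<ge> 0" "\<And>x. norm (f x) \<le> M1" using Cb_bound[OF f] by blast
  obtain M2 where M2: "M2 \<ge> 0" "\<And>x. norm (g x) \<le> M2" using Cb_bound[OF g] by blast
  show ?thesis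
  proof (rule CbI[where M="M1+M2"])
    show "continuous_map X euclidean (\<lambda>x. f x + g x)" by (rule continuous_map_add[OF CbD(1)[OF f] CbD(1)[OF g]])
    fix x show "norm (f x + g x) \<le> M1 + M2"
      by (meson M1(2) M2(2) add_mono norm_triangle_le)
  qed (simp add: CbD(2)[OF f] CbD(2)[OF g])
qed

lemma Cb_cnj: "f \<in> Cb X \<Longrightarrow> (\<lambda>x. cnj (f x)) \<in> Cb X"
proof -
  assume f: "f \<in> Cb X"
  obtain M1 where M1: "M1 \<ge> 0" "\<And>x. norm (f x) \<le> M1" using Cb_bound[OF f] by blast
  show ?thesis
    by (rule CbI[where M=M1]) (auto simp: cm_cnj CbD[OF f] M1)
qed

definition ind :: "'a topology \<Rightarrow> 'a \<Rightarrow> complex" where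
  "ind X = (\<lambda>x. if x \<in> topspace X then 1 else 0)"

lemma ind_Cb: "ind X \<in> Cb X"
  unfolding ind_def by (rule CbI[where M=1]) (auto intro: cm_if)

lemma Cb_scale: "f \<in> Cb X \<Longrightarrow> (\<lambda>x. c * f x) \<in> Cb X"
proof -
  assume f: "f \<in> Cb X"
  have "(\<lambda>x. (c * ind X x) * f x) \<in> Cb X"
    by (rule Cb_mult[OF _ f]) (rule CbI[where M="norm c"], auto simp: ind_def intro!: cm_if cm_mult)
  moreover have "(\<lambda>x. (c * ind X x) * f x) = (\<lambda>x. c * f x)"
    using CbD(2)[OF f] by (auto simp: ind_def fun_eq_iff)
  ultimately show ?thesis by simp
qed

lemma Cb_zero: "(\<lambda>x. 0) \<in> Cb X"
  by (rule CbI[where M=0]) auto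

lemma C0D:
  assumes "h \<in> C0 B"
  shows "continuous_map B euclidean h" "\<And>b. b \<notin> topspace B \<Longrightarrow> h b = 0"
    "\<And>e. e > 0 \<Longrightarrow> compactin B {b \<in> topspace B. e \<le> norm (h b)}"
  using assms unfolding C0_def by blast+

lemma C0I:
  assumes "continuous_map B euclidean h" "\<And>b. b \<notin> topspace B \<Longrightarrow> h b = 0"
    "\<And>e. e > 0 \<Longrightarrow> \<exists>K. compactin B K \<and> {b \<in> topspace B. e \<le> norm (h b)} \<subseteq> K"
  shows "h \<in> C0 B"
proof -
  have "compactin B {b \<in> topspace B. e \<le> norm (h b)}" if e: "e > 0" for e
  proof -
    obtain K where K: "compactin B K" "{b \<in> topspace B. e \<le> norm (h b)} \<subseteq> K"
      using assms(3)[OF e] by blast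
    have "closedin B {b \<in> topspace B. h b \<in> {z. e \<le> norm z}}"
      by (rule closedin_continuous_map_preimage[OF assms(1)])
         (simp add: closed_Collect_le continuous_on_norm_id)
    then show ?thesis using closed_compactin[OF K(1) K(2)] by simp
  qed
  then show ?thesis using assms unfolding C0_def by blast
qed

lemma C0_bound:
  assumes "h \<in> C0 B"
  obtains M where "M \<ge> 0" "\<And>b. norm (h b) \<le> M"
proof -
  have "compactin B {b \<in> topspace B. 1 \<le> norm (h b)}" using C0D(3)[OF assms] by simp
  then have "compactin euclidean (h ` {b \<in> topspace B. 1 \<le> norm (h b)})"
    using image_compactin C0D(1)[OF assms] by blast
  then have "bounded (h ` {b \<in> topspace B. 1 \<le> norm (h b)})"
    by (simp add: compact_imp_bounded)
  then obtain M where M: "\<And>y. y \<in> h ` {b \<in> topspace B. 1 \<le> norm (h b)} \<Longrightarrow> norm y \<le> M"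
    by (meson bounded_iff)
  show ?thesis
  proof (rule that[of "max M 1"])
    fix b show "norm (h b) \<le> max M 1"
    proof (cases "b \<in> topspace B \<and> 1 \<le> norm (h b)")
      case True then show ?thesis using M[of "h b"] by force
    next
      case False then show ?thesis using C0D(2)[OF assms, of b] by auto
    qed
  qed simp
qed

lemma C0_add: "h \<in> C0 B \<Longrightarrow> k \<in> C0 B \<Longrightarrow> (\<lambda>b. h b + k b) \<in> C0 B"
proof -
  assume h: "h \<in> C0 B" and k: "k \<in> C0 B"
  show ?thesis
  proof (rule C0I)
    show "continuous_map B euclidean (\<lambda>b. h b + k b)"
      by (rule continuous_map_add[OF C0D(1)[OF h] C0D(1)[OF k]])
    fix e :: real assume e: "e > 0"
    have "{b \<in> topspace B. e \<le> norm (h b + k b)} \<subseteq>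
          {b \<in> topspace B. e/2 \<le> norm (h b)} \<union> {b \<in> topspace B. e/2 \<le> norm (k b)}"
    proof
      fix b assume "b \<in> {b \<in> topspace B. e \<le> norm (h b + k b)}"
      then have "b \<in> topspace B" "e \<le> norm (h b + k b)" by auto
      moreover have "norm (h b + k b) \<le> norm (h b) + norm (k b)" by (rule norm_triangle_ineq)
      ultimately show "b \<in> {b \<in> topspace B. e/2 \<le> norm (h b)} \<union> {b \<in> topspace B. e/2 \<le> norm (k b)}"
        by auto
    qed
    then show "\<exists>K. compactin B K \<and> {b \<in> topspace B. e \<le> norm (h b + k b)} \<subseteq> K"
      using compactin_Un C0D(3)[OF h] C0D(3)[OF k] e by (meson half_gt_zero)
  qed (simp add: C0D(2)[OF h] C0D(2)[OF k])
qed

lemma C0_mult: "h \<in> C0 B \<Longrightarrow> k \<in> C0 B \<Longrightarrow> (\<lambda>b. h b * k b) \<in> C0 B"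
proof -
  assume h: "h \<in> C0 B" and k: "k \<in> C0 B"
  obtain M where M: "M \<ge> 0" "\<And>b. norm (k b) \<le> M" using C0_bound[OF k] by blast
  show ?thesis
  proof (rule C0I)
    show "continuous_map B euclidean (\<lambda>b. h b * k b)"
      by (rule cm_mult[OF C0D(1)[OF h] C0D(1)[OF k]])
    fix e :: real assume e: "e > 0"
    have "{b \<in> topspace B. e \<le> norm (h b * k b)} \<subseteq> {b \<in> topspace B. e/(M+1) \<le> norm (h b)}"
    proof
      fix b assume "b \<in> {b \<in> topspace B. e \<le> norm (h b * k b)}"
      then have "b \<in> topspace B" "e \<le> norm (h b * k b)" by auto
      moreover have "norm (h b * k b) \<le> norm (h b) * (M+1)"
        unfolding norm_mult using M(2)[of b] by (intro mult_left_mono) auto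
      ultimately have "e \<le> norm (h b) * (M+1)" by linarith
      then show "b \<in> {b \<in> topspace B. e/(M+1) \<le> norm (h b)}"
        using \<open>b \<in> topspace B\<close> M(1) by (simp add: pos_divide_le_eq)
    qed
    moreover have "e/(M+1) > 0" using e M by simp
    ultimately show "\<exists>K. compactin B K \<and> {b \<in> topspace B. e \<le> norm (h b * k b)} \<subseteq> K"
      using C0D(3)[OF h] by blast
  qed (simp add: C0D(2)[OF h])
qed

lemma C0_mono:
  assumes h: "h \<in> C0 B" and k: "continuous_map B euclidean k" "\<And>b. norm (k b) \<le> norm (h b)"
  shows "k \<in> C0 B"
proof (rule C0I[OF k(1)])
  fix b assume "b \<notin> topspace B" then show "k b = 0" using k(2)[of b] C0D(2)[OF h] by auto
next
  fix e :: real assume "e > 0"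
  then show "\<exists>K. compactin B K \<and> {b \<in> topspace B. e \<le> norm (k b)} \<subseteq> K"
  proof (intro exI conjI)
    show "compactin B {b \<in> topspace B. e \<le> norm (h b)}" using C0D(3)[OF h] \<open>e>0\<close> by blast
    show "{b \<in> topspace B. e \<le> norm (k b)} \<subseteq> {b \<in> topspace B. e \<le> norm (h b)}"
      using k(2) order.trans by blast
  qed
qed

lemma C0_cnj: "h \<in> C0 B \<Longrightarrow> (\<lambda>b. cnj (h b)) \<in> C0 B"
  by (rule C0_mono[of h]) (auto intro: cm_cnj C0D)

lemma C0_Re: "h \<in> C0 B \<Longrightarrow> (\<lambda>b. complex_of_real (Re (h b))) \<in> C0 B"
  by (rule C0_mono[of h]) (auto intro: cm_Re C0D abs_Re_le_cmod)

lemma C0_Im: "h \<in> C0 B \<Longrightarrow> (\<lambda>b. complex_of_real (Im (h b))) \<in> C0 B"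
  by (rule C0_mono[of h]) (auto intro: cm_Im C0D abs_Im_le_cmod)

lemma C0_zero: "(\<lambda>b. 0) \<in> C0 B"
  by (rule C0I) auto

lemma C0_scale: "h \<in> C0 B \<Longrightarrow> (\<lambda>b. c * h b) \<in> C0 B"
proof -
  assume h: "h \<in> C0 B"
  show ?thesis
  proof (cases "c = 0")
    case True then show ?thesis using C0_zero by simp
  next
    case False
    show ?thesis
    proof (rule C0I)
      show "continuous_map B euclidean (\<lambda>b. c * h b)"
        by (rule cm_mult[OF _ C0D(1)[OF h]]) simp
      fix e :: real assume e: "e > 0"
      have "{b \<in> topspace B. e \<le> norm (c * h b)} = {b \<in> topspace B. e / norm c \<le> norm (h b)}"
        using False by (auto simp: norm_mult divide_le_eq mult.commute)
      moreover have "e / norm c > 0" using e False by simp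
      ultimately show "\<exists>K. compactin B K \<and> {b \<in> topspace B. e \<le> norm (c * h b)} \<subseteq> K"
        using C0D(3)[OF h] by auto
    qed (simp add: C0D(2)[OF h])
  qed
qed

lemma C0_sum: "finite I \<Longrightarrow> (\<And>i. i \<in> I \<Longrightarrow> g i \<in> C0 B) \<Longrightarrow> (\<lambda>b. \<Sum>i\<in>I. g i b) \<in> C0 B"
proof (induction I rule: finite_induct)
  case empty then show ?case using C0_zero by simp
next
  case (insert i I) then show ?case using C0_add[of "g i" B "\<lambda>b. \<Sum>i\<in>I. g i b"] by simp
qed



locale bsp =
  fixes X :: "'a topology" and B :: "'b topology" and r :: "'a \<Rightarrow> 'b"
  assumes lcB: "locally_compact_space B" and HB: "Hausdorff_space B"
    and rc: "continuous_map X B r"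
begin

abbreviation "A \<equiv> HX X B r"

definition E :: "('b \<Rightarrow> complex) \<Rightarrow> 'a \<Rightarrow> complex" where
  "E h = (\<lambda>x. if x \<in> topspace X then h (r x) else 0)"

lemma gen_Cb: assumes "p \<in> HX_gen X B r" shows "p \<in> Cb X"
proof -
  obtain g h where p: "p = (\<lambda>x. g x * h (r x))" and g: "g \<in> Cb X" and h: "h \<in> C0 B"
    using assms unfolding HX_gen_def by blast
  obtain M1 where M1: "M1 \<ge> 0" "\<And>x. norm (g x) \<le> M1" using Cb_bound[OF g] by blast
  obtain M2 where M2: "M2 \<ge> 0" "\<And>b. norm (h b) \<le> M2" using C0_bound[OF h] by blast
  show ?thesis unfolding p
  proof (rule CbI[where M="M1*M2"])
    show "continuous_map X euclidean (\<lambda>x. g x * h (r x))"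
      by (rule cm_mult[OF CbD(1)[OF g]]) (rule continuous_map_compose[OF rc C0D(1)[OF h], unfolded o_def])
    fix x show "norm (g x * h (r x)) \<le> M1 * M2"
      by (simp add: norm_mult M1 M2 mult_mono')
  qed (simp add: CbD(2)[OF g])
qed

lemma genI: "g \<in> Cb X \<Longrightarrow> h \<in> C0 B \<Longrightarrow> (\<lambda>x. g x * h (r x)) \<in> HX_gen X B r"
  unfolding HX_gen_def by blast

lemma span_Cb: "s \<in> HX_span X B r \<Longrightarrow> s \<in> Cb X"
proof (induction rule: HX_span.induct)
  case zero then show ?case by (rule Cb_zero)
next
  case (add s p c) then show ?case using Cb_add[OF add.IH Cb_scale[OF gen_Cb[OF add.hyps(2)]]] by simp
qed

lemma span_add: "t \<in> HX_span X B r \<Longrightarrow> s \<in> HX_span X B r \<Longrightarrow> (\<lambda>x. s x + t x) \<in> HX_span X B r"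
proof (induction rule: HX_span.induct)
  case zero then show ?case by simp
next
  case (add t p c)
  have "(\<lambda>x. (s x + t x) + c * p x) \<in> HX_span X B r"
    by (rule HX_span.add[OF add.IH[OF add.prems] add.hyps(2,3)])
  then show ?case by (simp add: add.assoc)
qed

lemma span_ideal: "s \<in> HX_span X B r \<Longrightarrow> g \<in> Cb X \<Longrightarrow> (\<lambda>x. g x * s x) \<in> HX_span X B r"
proof (induction rule: HX_span.induct)
  case zero then show ?case by (simp add: HX_span.zero)
next
  case (add s p c)
  obtain g' h where p: "p = (\<lambda>x. g' x * h (r x))" and g': "g' \<in> Cb X" and h: "h \<in> C0 B"
    using add.hyps(2) unfolding HX_gen_def by blast
  have "(\<lambda>x. g x * g' x * h (r x)) \<in> HX_gen X B r"
    using genI[OF Cb_mult[OF add.prems g'] h] by simp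
  then have "(\<lambda>x. g x * s x + c * (g x * g' x * h (r x))) \<in> HX_span X B r"
    by (rule HX_span.add[OF add.IH[OF add.prems] _ add.hyps(3)])
  then show ?case by (simp add: p algebra_simps)
qed

lemma span_cnj: "s \<in> HX_span X B r \<Longrightarrow> (\<lambda>x. cnj (s x)) \<in> HX_span X B r"
proof (induction rule: HX_span.induct)
  case zero then show ?case by (simp add: HX_span.zero)
next
  case (add s p c)
  obtain g' h where p: "p = (\<lambda>x. g' x * h (r x))" and g': "g' \<in> Cb X" and h: "h \<in> C0 B"
    using add.hyps(2) unfolding HX_gen_def by blast
  have "(\<lambda>x. cnj (g' x) * cnj (h (r x))) \<in> HX_gen X B r"
    using genI[OF Cb_cnj[OF g'] C0_cnj[OF h]] by simp
  then have "(\<lambda>x. cnj (s x) + cnj c * (cnj (g' x) * cnj (h (r x)))) \<in> HX_span X B r"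
    by (rule HX_span.add[OF add.IH]) (use add.hyps(3) in simp)
  then show ?case by (simp add: p)
qed

lemma gen_span: "p \<in> HX_gen X B r \<Longrightarrow> p \<in> HX_span X B r"
  using HX_span.add[OF HX_span.zero, where p=p and c=1] by simp

lemma HXI: "f \<in> Cb X \<Longrightarrow> (\<And>e. e > 0 \<Longrightarrow> \<exists>s\<in>HX_span X B r. \<forall>x\<in>topspace X. norm (f x - s x) \<le> e) \<Longrightarrow> f \<in> A"
  unfolding HX_def by blast

lemma HXD: "f \<in> A \<Longrightarrow> f \<in> Cb X"
  "f \<in> A \<Longrightarrow> e > 0 \<Longrightarrow> \<exists>s\<in>HX_span X B r. \<forall>x\<in>topspace X. norm (f x - s x) \<le> e"
  unfolding HX_def by blast+

lemma span_HX: "s \<in> HX_span X B r \<Longrightarrow> s \<in> A"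
proof (rule HXI[OF span_Cb])
  fix e :: real assume "s \<in> HX_span X B r" "e > 0"
  then show "\<exists>t\<in>HX_span X B r. \<forall>x\<in>topspace X. norm (s x - t x) \<le> e" by (intro bexI[of _ s]) auto
qed

lemma gen_HX: "p \<in> HX_gen X B r \<Longrightarrow> p \<in> A"
  by (rule span_HX[OF gen_span])

lemma HX_add: assumes f: "f \<in> A" and g: "g \<in> A" shows "(\<lambda>x. f x + g x) \<in> A"
proof (rule HXI[OF Cb_add[OF HXD(1)[OF f] HXD(1)[OF g]]])
  fix e :: real assume e: "e > 0"
  obtain s where s: "s \<in> HX_span X B r" "\<forall>x\<in>topspace X. norm (f x - s x) \<le> e/2"
    using HXD(2)[OF f, of "e/2"] e by auto
  obtain t where t: "t \<in> HX_span X B r" "\<forall>x\<in>topspace X. norm (g x - t x) \<le> e/2"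
    using HXD(2)[OF g, of "e/2"] e by auto
  show "\<exists>s\<in>HX_span X B r. \<forall>x\<in>topspace X. norm (f x + g x - s x) \<le> e"
  proof (intro bexI ballI)
    fix x assume x: "x \<in> topspace X"
    have "norm (f x + g x - (s x + t x)) \<le> norm (f x - s x) + norm (g x - t x)"
      by (metis add_diff_add norm_triangle_ineq)
    then show "norm (f x + g x - (s x + t x)) \<le> e" using s(2) t(2) x by fastforce
  qed (rule span_add[OF t(1) s(1)])
qed

lemma HX_ideal: assumes g: "g \<in> Cb X" and f: "f \<in> A" shows "(\<lambda>x. g x * f x) \<in> A"
proof (rule HXI[OF Cb_mult[OF g HXD(1)[OF f]]])
  fix e :: real assume e: "e > 0"
  obtain M where M: "M \<ge> 0" "\<And>x. norm (g x) \<le> M" using Cb_bound[OF g] by blast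
  obtain s where s: "s \<in> HX_span X B r" "\<forall>x\<in>topspace X. norm (f x - s x) \<le> e/(M+1)"
    using HXD(2)[OF f, of "e/(M+1)"] e M by auto
  show "\<exists>s\<in>HX_span X B r. \<forall>x\<in>topspace X. norm (g x * f x - s x) \<le> e"
  proof (intro bexI ballI)
    fix x assume x: "x \<in> topspace X"
    have eq: "norm (g x * f x - g x * s x) = norm (g x) * norm (f x - s x)"
      by (metis norm_mult right_diff_distrib)
    have "norm (g x) \<le> M + 1" using M(2)[of x] by linarith
    then have "norm (g x) * norm (f x - s x) \<le> (M+1) * (e/(M+1))"
      using M s(2) x by (intro mult_mono) auto
    also have "\<dots> = e" using M by simp
    finally show "norm (g x * f x - g x * s x) \<le> e" using eq by simp
  qed (rule span_ideal[OF s(1) g])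
qed

lemma HX_mult: "f \<in> A \<Longrightarrow> g \<in> A \<Longrightarrow> (\<lambda>x. f x * g x) \<in> A"
  by (rule HX_ideal[OF HXD(1)])

lemma HX_scale: assumes f: "f \<in> A" shows "(\<lambda>x. c * f x) \<in> A"
proof -
  have "(\<lambda>x. (c * ind X x) * f x) \<in> A"
    by (rule HX_ideal[OF Cb_scale[OF ind_Cb] f])
  moreover have "(\<lambda>x. (c * ind X x) * f x) = (\<lambda>x. c * f x)"
    using CbD(2)[OF HXD(1)[OF f]] by (auto simp: ind_def fun_eq_iff)
  ultimately show ?thesis by simp
qed

lemma HX_cnj: assumes f: "f \<in> A" shows "(\<lambda>x. cnj (f x)) \<in> A"
proof (rule HXI[OF Cb_cnj[OF HXD(1)[OF f]]])
  fix e :: real assume e: "e > 0"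
  obtain s where s: "s \<in> HX_span X B r" "\<forall>x\<in>topspace X. norm (f x - s x) \<le> e"
    using HXD(2)[OF f e] by auto
  show "\<exists>s\<in>HX_span X B r. \<forall>x\<in>topspace X. norm (cnj (f x) - s x) \<le> e"
  proof (intro bexI ballI)
    fix x assume "x \<in> topspace X"
    then show "norm (cnj (f x) - cnj (s x)) \<le> e" using s(2)
      by (metis complex_cnj_diff complex_mod_cnj)
  qed (rule span_cnj[OF s(1)])
qed

lemma HX_zero: "(\<lambda>x. 0) \<in> A"
  by (rule span_HX[OF HX_span.zero])

lemma HX_sum: "finite I \<Longrightarrow> (\<And>i. i \<in> I \<Longrightarrow> g i \<in> A) \<Longrightarrow> (\<lambda>x. \<Sum>i\<in>I. g i x) \<in> A"
proof (induction I rule: finite_induct)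
  case empty then show ?case using HX_zero by simp
next
  case (insert i I) then show ?case using HX_add[of "g i" "\<lambda>x. \<Sum>i\<in>I. g i x"] by simp
qed

lemma HX_diff: "f \<in> A \<Longrightarrow> g \<in> A \<Longrightarrow> (\<lambda>x. f x - g x) \<in> A"
  using HX_add[of f "\<lambda>x. (-1) * g x"] HX_scale[of g "-1"] by simp

lemma E_HX: assumes h: "h \<in> C0 B" shows "E h \<in> A"
proof -
  have "(\<lambda>x. ind X x * h (r x)) \<in> HX_gen X B r"
    unfolding HX_gen_def using ind_Cb h by blast
  moreover have "(\<lambda>x. ind X x * h (r x)) = E h" by (auto simp: ind_def E_def fun_eq_iff)
  ultimately show ?thesis using gen_HX by simp
qed

lemma E_add: "E (\<lambda>b. h b + k b) = (\<lambda>x. E h x + E k x)" by (auto simp: E_def fun_eq_iff)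
lemma E_mult: "E (\<lambda>b. h b * k b) = (\<lambda>x. E h x * E k x)" by (auto simp: E_def fun_eq_iff)
lemma E_scale: "E (\<lambda>b. c * h b) = (\<lambda>x. c * E h x)" by (auto simp: E_def fun_eq_iff)
lemma E_cnj: "E (\<lambda>b. cnj (h b)) = (\<lambda>x. cnj (E h x))" by (auto simp: E_def fun_eq_iff)
lemma E_Re: "E (\<lambda>b. complex_of_real (Re (h b))) = (\<lambda>x. complex_of_real (Re (E h x)))" by (auto simp: E_def fun_eq_iff)
lemma E_sum: "E (\<lambda>b. \<Sum>i\<in>I. g i b) = (\<lambda>x. \<Sum>i\<in>I. E (g i) x)" by (auto simp: E_def fun_eq_iff)

lemma chD:
  assumes "\<phi> \<in> characters A"
  shows "\<phi> \<in> extensional A"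
    "\<And>f g. f \<in> A \<Longrightarrow> g \<in> A \<Longrightarrow> \<phi> (\<lambda>x. f x + g x) = \<phi> f + \<phi> g"
    "\<And>f c. f \<in> A \<Longrightarrow> \<phi> (\<lambda>x. c * f x) = c * \<phi> f"
    "\<And>f g. f \<in> A \<Longrightarrow> g \<in> A \<Longrightarrow> \<phi> (\<lambda>x. f x * g x) = \<phi> f * \<phi> g"
    "\<exists>f\<in>A. \<phi> f \<noteq> 0"
  using assms unfolding characters_def by blast+

context
  fixes \<phi> assumes ch: "\<phi> \<in> characters A"
begin

lemma ch_add: "f \<in> A \<Longrightarrow> g \<in> A \<Longrightarrow> \<phi> (\<lambda>x. f x + g x) = \<phi> f + \<phi> g" by (rule chD(2)[OF ch])
lemma ch_scale: "f \<in> A \<Longrightarrow> \<phi> (\<lambda>x. c * f x) = c * \<phi> f" by (rule chD(3)[OF ch])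
lemma ch_mult: "f \<in> A \<Longrightarrow> g \<in> A \<Longrightarrow> \<phi> (\<lambda>x. f x * g x) = \<phi> f * \<phi> g" by (rule chD(4)[OF ch])

lemma ch_zero: "\<phi> (\<lambda>x. 0) = 0"
  using ch_scale[OF HX_zero, of 0] by simp

lemma ch_diff: "f \<in> A \<Longrightarrow> g \<in> A \<Longrightarrow> \<phi> (\<lambda>x. f x - g x) = \<phi> f - \<phi> g"
  using ch_add[of f "\<lambda>x. (-1) * g x"] ch_scale[of g "-1"] HX_scale[of g "-1"] by simp

lemma ch_sum: "finite I \<Longrightarrow> (\<And>i. i \<in> I \<Longrightarrow> g i \<in> A) \<Longrightarrow> \<phi> (\<lambda>x. \<Sum>i\<in>I. g i x) = (\<Sum>i\<in>I. \<phi> (g i))"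
proof (induction I rule: finite_induct)
  case empty then show ?case using ch_zero by simp
next
  case (insert i I)
  then show ?case using ch_add[of "g i" "\<lambda>x. \<Sum>i\<in>I. g i x"] HX_sum[of I g] by simp
qed

lemma keyL:
  assumes f: "f \<in> A" and nz: "\<phi> f \<noteq> 0" and d: "d > 0"
  shows "\<exists>x\<in>topspace X. norm (f x - \<phi> f) < d"
proof (rule ccontr)
  assume "\<not> ?thesis"
  then have far: "\<And>x. x \<in> topspace X \<Longrightarrow> d \<le> norm (\<phi> f - f x)" by (simp add: norm_minus_commute not_less)
  define l where "l = \<phi> f"
  define g where "g = (\<lambda>x. if x \<in> topspace X then inverse (l - f x) else 0)"
  have fC: "f \<in> Cb X" by (rule HXD(1)[OF f])
  have nz0: "l - f x \<noteq> 0" if x: "x \<in> topspace X" for x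
  proof -
    have "d \<le> norm (l - f x)" using far[OF x] l_def by simp
    then show ?thesis using d by auto
  qed
  have gC: "g \<in> Cb X" unfolding g_def
  proof (rule CbI[where M="inverse d"])
    show "continuous_map X euclidean (\<lambda>x. if x \<in> topspace X then inverse (l - f x) else 0)"
      by (rule cm_if, rule cm_inv[OF continuous_map_diff[OF continuous_map_canonical_const CbD(1)[OF fC]] nz0])
    fix x assume x: "x \<in> topspace X"
    then show "norm (if x \<in> topspace X then inverse (l - f x) else 0) \<le> inverse d"
      using far[OF x] d l_def by (simp add: norm_inverse le_imp_inverse_le)
  qed simp
  define k where "k = (\<lambda>x. g x * f x)"
  have kA: "k \<in> A" unfolding k_def by (rule HX_ideal[OF gC f])
  have fkA: "(\<lambda>x. f x * k x) \<in> A" by (rule HX_mult[OF f kA])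
  have eq: "f = (\<lambda>x. l * k x - f x * k x)"
  proof
    fix x show "f x = l * k x - f x * k x"
    proof (cases "x \<in> topspace X")
      case True
      have nz: "l - f x \<noteq> 0" by (rule nz0[OF True])
      have "l * k x - f x * k x = (l - f x) * (inverse (l - f x) * f x)"
        by (simp add: k_def g_def True algebra_simps)
      also have "\<dots> = f x" using nz by (simp add: mult.assoc[symmetric])
      finally show ?thesis by simp
    next
      case False then show ?thesis using CbD(2)[OF fC] by (simp add: k_def g_def)
    qed
  qed
  have "\<phi> f = \<phi> (\<lambda>x. l * k x - f x * k x)" by (subst eq) simp
  also have "\<dots> = l * \<phi> k - \<phi> f * \<phi> k"
    by (simp add: ch_diff HX_scale[OF kA] fkA ch_scale kA ch_mult f)
  finally have "\<phi> f = l * \<phi> k - \<phi> f * \<phi> k" .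
  then have "\<phi> f = 0" by (simp add: l_def)
  then show False using nz by simp
qed

lemma X_ne: "topspace X \<noteq> {}"
proof -
  obtain f where "f \<in> A" "\<phi> f \<noteq> 0" using chD(5)[OF ch] by blast
  then obtain x where "x \<in> topspace X" using keyL[of f 1] by auto
  then show ?thesis by auto
qed

lemma ch_bound:
  assumes f: "f \<in> A" and M: "\<And>x. x \<in> topspace X \<Longrightarrow> norm (f x) \<le> M"
  shows "norm (\<phi> f) \<le> M"
proof (rule ccontr)
  assume "\<not> ?thesis"
  then have lt: "M < norm (\<phi> f)" by simp
  have "M \<ge> 0" using X_ne M by (meson all_not_in_conv norm_ge_zero order.trans)
  then have "\<phi> f \<noteq> 0" using lt by auto
  then obtain x where x: "x \<in> topspace X" "norm (f x - \<phi> f) < norm (\<phi> f) - M"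
    using keyL[OF f, of "norm (\<phi> f) - M"] lt by auto
  have "norm (\<phi> f) \<le> norm (f x) + norm (f x - \<phi> f)"
    by (metis add.commute norm_minus_commute norm_triangle_sub)
  then show False using x M[OF x(1)] by linarith
qed

lemma ch_real:
  assumes f: "f \<in> A" and re: "\<And>x. Im (f x) = 0"
  shows "Im (\<phi> f) = 0"
proof (rule ccontr)
  assume ne: "Im (\<phi> f) \<noteq> 0"
  then have "\<phi> f \<noteq> 0" by auto
  then obtain x where x: "x \<in> topspace X" "norm (f x - \<phi> f) < \<bar>Im (\<phi> f)\<bar>"
    using keyL[OF f, of "\<bar>Im (\<phi> f)\<bar>"] ne by auto
  have "\<bar>Im (f x - \<phi> f)\<bar> \<le> norm (f x - \<phi> f)" by (rule abs_Im_le_cmod)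
  then show False using x re[of x] by simp
qed

lemma ch_Re:
  assumes f: "f \<in> A"
  shows "(\<lambda>x. complex_of_real (Re (f x))) \<in> A"
    "\<phi> (\<lambda>x. complex_of_real (Re (f x))) = complex_of_real (Re (\<phi> f))"
proof -
  define R where "R = (\<lambda>x. complex_of_real (Re (f x)))"
  define I where "I = (\<lambda>x. complex_of_real (Im (f x)))"
  have R: "R = (\<lambda>x. (1/2) * (f x + cnj (f x)))"
    by (auto simp: R_def fun_eq_iff complex_add_cnj)
  have I: "I = (\<lambda>x. (- \<i>/2) * (f x - cnj (f x)))"
    by (auto simp: I_def fun_eq_iff complex_diff_cnj field_simps)
  have RA: "R \<in> A" unfolding R by (intro HX_scale HX_add f HX_cnj)
  have IA: "I \<in> A" unfolding I by (intro HX_scale HX_diff f HX_cnj)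
  have fe: "f = (\<lambda>x. R x + \<i> * I x)"
    by (auto simp: R_def I_def fun_eq_iff complex_eq_iff)
  have "\<phi> f = \<phi> R + \<i> * \<phi> I"
    by (subst fe, subst ch_add) (auto simp: RA IA HX_scale ch_scale)
  moreover have "Im (\<phi> R) = 0" by (rule ch_real[OF RA]) (simp add: R_def)
  moreover have "Im (\<phi> I) = 0" by (rule ch_real[OF IA]) (simp add: I_def)
  ultimately have "\<phi> R = complex_of_real (Re (\<phi> f))" by (simp add: complex_eq_iff)
  then show "\<phi> (\<lambda>x. complex_of_real (Re (f x))) = complex_of_real (Re (\<phi> f))" by (simp add: R_def)
  show "(\<lambda>x. complex_of_real (Re (f x))) \<in> A" using RA by (simp add: R_def)
qed

end

end



lemma cm_of_real:
  "continuous_map X euclideanreal f \<Longrightarrow> continuous_map X euclidean (\<lambda>x. complex_of_real (f x))"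
  by (simp add: continuous_map_atin tendsto_of_real)

lemma C0_diff: "h \<in> C0 B \<Longrightarrow> k \<in> C0 B \<Longrightarrow> (\<lambda>b. h b - k b) \<in> C0 B"
  using C0_add[of h B "\<lambda>b. (-1) * k b"] C0_scale[of k B "-1"] by simp

lemma compact_pos_min:
  assumes K: "compactin B K" and f: "continuous_map B euclideanreal f" and pos: "\<And>b. b \<in> K \<Longrightarrow> f b > 0"
  obtains \<delta> where "\<delta> > 0" "\<And>b. b \<in> K \<Longrightarrow> \<delta> \<le> f b"
proof (cases "K = {}")
  case True then show ?thesis using that[of 1] by auto
next
  case False
  have "compactin euclideanreal (f ` K)" by (rule image_compactin[OF K f])
  then have "compact (f ` K)" by simp
  then obtain b0 where b0: "b0 \<in> K" "\<And>b. b \<in> K \<Longrightarrow> f b0 \<le> f b"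
    using compact_attains_inf[of "f ` K"] False by auto
  show ?thesis using that[of "f b0"] b0 pos by auto
qed

context bsp
begin

lemma bump:
  assumes K: "compactin B K" and W: "openin B W" and KW: "K \<subseteq> W"
  obtains h where "h \<in> C0 B" "\<And>b. Im (h b) = 0" "\<And>b. 0 \<le> Re (h b)" "\<And>b. Re (h b) \<le> 1"
    "\<And>b. b \<in> K \<Longrightarrow> h b = 1" "\<And>b. b \<notin> W \<Longrightarrow> h b = 0"
proof -
  obtain U L where UL: "openin B U" "compactin B L" "closedin B L" "K \<subseteq> U" "U \<subseteq> L"
    using lcB HB locally_compact_space_compact_closed_compact K by metis
  define V where "V = U \<inter> W"
  have V: "openin B V" "K \<subseteq> V" using UL W KW by (auto simp: V_def)
  have cr: "completely_regular_space B"
    using locally_compact_regular_imp_completely_regular_space lcB HB by blast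
  have T: "closedin B (topspace B - V)" using V by blast
  have dj: "disjnt K (topspace B - V)" using V by (auto simp: disjnt_def)
  obtain f where f: "continuous_map B (top_of_set {0..1}) f" "f ` (topspace B - V) \<subseteq> {0}" "f ` K \<subseteq> {1::real}"
    using Urysohn_completely_regular_compact_closed[of 0 1 B K "topspace B - V"] cr K T dj by auto
  have frng: "f b \<in> {0..1}" if "b \<in> topspace B" for b
    using continuous_map_image_subset_topspace[OF f(1)] that by auto
  have fc: "continuous_map B euclideanreal f" using f(1) continuous_map_into_fulltopology by blast
  define h where "h = (\<lambda>b. if b \<in> topspace B then complex_of_real (f b) else 0)"
  have hc: "continuous_map B euclidean h" unfolding h_def by (intro cm_if cm_of_real fc)
  show ?thesis
  proof (rule that[of h])
    show "h \<in> C0 B"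
    proof (rule C0I[OF hc])
      fix e :: real assume e: "e > 0"
      have "{b \<in> topspace B. e \<le> norm (h b)} \<subseteq> L"
      proof
        fix b assume b: "b \<in> {b \<in> topspace B. e \<le> norm (h b)}"
        show "b \<in> L"
        proof (rule ccontr)
          assume "b \<notin> L"
          then have "b \<in> topspace B - V" using b UL V_def by auto
          then have "f b = 0" using f(2) by auto
          then show False using b e by (auto simp: h_def)
        qed
      qed
      then show "\<exists>K. compactin B K \<and> {b \<in> topspace B. e \<le> norm (h b)} \<subseteq> K" using UL by blast
    qed (simp add: h_def)
    fix b
    show "Im (h b) = 0" by (simp add: h_def)
    show "0 \<le> Re (h b)" using frng[of b] by (simp add: h_def)
    show "Re (h b) \<le> 1" using frng[of b] by (simp add: h_def)
    show "b \<in> K \<Longrightarrow> h b = 1" using f(3) compactin_subset_topspace[OF K] by (auto simp: h_def)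
    show "b \<notin> W \<Longrightarrow> h b = 0" using f(2) by (auto simp: h_def V_def)
  qed
qed

lemma bump_ex:
  assumes "compactin B K" "openin B W" "K \<subseteq> W"
  shows "\<exists>h\<in>C0 B. (\<forall>b. Im (h b) = 0 \<and> 0 \<le> Re (h b) \<and> Re (h b) \<le> 1) \<and> (\<forall>b\<in>K. h b = 1) \<and> (\<forall>b. b \<notin> W \<longrightarrow> h b = 0)"
  by (rule bump[OF assms]) blast

lemma point_unique:
  assumes b: "b \<in> topspace B" and b': "b' \<in> topspace B" and eq: "\<And>h. h \<in> C0 B \<Longrightarrow> h b = h b'"
  shows "b = b'"
proof (rule ccontr)
  assume ne: "b \<noteq> b'"
  have "openin B (topspace B - {b'})" using closedin_Hausdorff_singleton[OF HB b'] by blast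
  then obtain h where h: "h \<in> C0 B" "h b = 1" "h b' = 0"
    using bump_ex[of "{b}" "topspace B - {b'}"] b ne by auto
  then show False using eq[OF h(1)] by simp
qed

lemma E_at: "x \<in> topspace X \<Longrightarrow> E h x = h (r x)" by (simp add: E_def)

lemma i_char: assumes x: "x \<in> topspace X" shows "betaB_i X B r x \<in> characters A"
proof -
  have rx: "r x \<in> topspace B" using rc x continuous_map_image_subset_topspace by blast
  obtain h where h: "h \<in> C0 B" "h (r x) = 1"
    using bump_ex[of "{r x}" "topspace B"] rx by auto
  show ?thesis unfolding characters_def betaB_i_def
    using HX_add HX_scale HX_mult E_HX[OF h(1)] E_at[OF x, of h] h(2)
    by (auto intro!: bexI[of _ "E h"])
qed

lemma i_apply: "f \<in> A \<Longrightarrow> betaB_i X B r x f = f x" by (simp add: betaB_i_def)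

context
  fixes \<phi> assumes ch: "\<phi> \<in> characters A"
begin

lemma span_gen_nz: "s \<in> HX_span X B r \<Longrightarrow> \<phi> s \<noteq> 0 \<Longrightarrow> \<exists>p\<in>HX_gen X B r. \<phi> p \<noteq> 0"
proof (induction rule: HX_span.induct)
  case zero then show ?case using ch_zero[OF ch] by simp
next
  case (add s p c)
  have "\<phi> (\<lambda>x. s x + c * p x) = \<phi> s + c * \<phi> p"
    using ch_add[OF ch] ch_scale[OF ch] span_HX[OF add.hyps(1)] gen_HX[OF add.hyps(2)] HX_scale by simp
  then show ?case
  proof (cases "\<phi> s = 0")
    case True then show ?thesis using add \<open>\<phi> (\<lambda>x. s x + c * p x) = \<phi> s + c * \<phi> p\<close> by auto
  next
    case False then show ?thesis using add.IH by blast
  qed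
qed

lemma E_nz: "\<exists>h\<in>C0 B. \<phi> (E h) \<noteq> 0"
proof -
  obtain f where f: "f \<in> A" "\<phi> f \<noteq> 0" using chD(5)[OF ch] by blast
  obtain s where s: "s \<in> HX_span X B r" "\<forall>x\<in>topspace X. norm (f x - s x) \<le> norm (\<phi> f) / 2"
    using HXD(2)[OF f(1), of "norm (\<phi> f)/2"] f(2) by auto
  have sA: "s \<in> A" by (rule span_HX[OF s(1)])
  have "norm (\<phi> (\<lambda>x. f x - s x)) \<le> norm (\<phi> f) / 2"
    by (rule ch_bound[OF ch HX_diff[OF f(1) sA]]) (use s(2) in auto)
  then have "norm (\<phi> f - \<phi> s) \<le> norm (\<phi> f) / 2" using ch_diff[OF ch f(1) sA] by simp
  then have "\<phi> s \<noteq> 0" using f(2) by auto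
  then obtain p where p: "p \<in> HX_gen X B r" "\<phi> p \<noteq> 0" using span_gen_nz s(1) by blast
  obtain g h where pe: "p = (\<lambda>x. g x * h (r x))" and g: "g \<in> Cb X" and h: "h \<in> C0 B"
    using p(1) unfolding HX_gen_def by blast
  define q where "q = (\<lambda>x. (g x * g x) * h (r x))"
  have qA: "q \<in> A" unfolding q_def by (rule gen_HX[OF genI[OF Cb_mult[OF g g] h]])
  have "(\<lambda>x. p x * p x) = (\<lambda>x. q x * E h x)"
    using CbD(2)[OF g] by (auto simp: pe q_def E_def fun_eq_iff)
  then have "\<phi> p * \<phi> p = \<phi> q * \<phi> (E h)"
    using ch_mult[OF ch] gen_HX[OF p(1)] qA E_HX[OF h] by metis
  then have "\<phi> (E h) \<noteq> 0" using p(2) by auto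
  then show ?thesis using h by blast
qed

lemma E_one: "\<exists>u\<in>C0 B. (\<forall>b. Im (u b) = 0) \<and> \<phi> (E u) = 1"
proof -
  obtain h where h: "h \<in> C0 B" "\<phi> (E h) \<noteq> 0" using E_nz by blast
  define c where "c = \<phi> (E h)"
  define h1 where "h1 = (\<lambda>b. inverse c * h b)"
  have h1: "h1 \<in> C0 B" unfolding h1_def by (rule C0_scale[OF h(1)])
  have "\<phi> (E h1) = 1" unfolding h1_def E_scale
    using ch_scale[OF ch E_HX[OF h(1)]] h(2) c_def by simp
  define u where "u = (\<lambda>b. complex_of_real (Re (h1 b)))"
  have "\<phi> (E u) = complex_of_real (Re (\<phi> (E h1)))" unfolding u_def E_Re
    by (rule ch_Re(2)[OF ch E_HX[OF h1]])
  then have "\<phi> (E u) = 1" using \<open>\<phi> (E h1) = 1\<close> by simp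
  moreover have "u \<in> C0 B" unfolding u_def by (rule C0_Re[OF h1])
  ultimately show ?thesis unfolding u_def by (intro bexI[where x="\<lambda>b. complex_of_real (Re (h1 b))"]) auto
qed

lemma point_exists: "\<exists>b\<in>topspace B. \<forall>h\<in>C0 B. \<phi> (E h) = h b"
proof (rule ccontr)
  assume "\<not> ?thesis"
  then have H: "\<And>b. b \<in> topspace B \<Longrightarrow> \<exists>h\<in>C0 B. \<phi> (E h) \<noteq> h b" by auto
  obtain u where u: "u \<in> C0 B" "\<And>b. Im (u b) = 0" "\<phi> (E u) = 1" using E_one by blast
  have EuA: "E u \<in> A" by (rule E_HX[OF u(1)])
  define K where "K = {b \<in> topspace B. 1/2 \<le> norm (u b)}"
  have K: "compactin B K" unfolding K_def using C0D(3)[OF u(1), of "1/2"] by simp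
  have "\<exists>g. g \<in> C0 B \<and> \<phi> (E g) = 0 \<and> g b \<noteq> 0" if b: "b \<in> K" for b
  proof (cases "u b = 1")
    case False
    define g where "g = (\<lambda>b. u b - u b * u b)"
    have gC: "g \<in> C0 B" unfolding g_def by (intro C0_diff C0_mult u(1))
    have "E g = (\<lambda>x. E u x - E u x * E u x)" by (auto simp: g_def E_def fun_eq_iff)
    then have "\<phi> (E g) = 0" using ch_diff[OF ch EuA HX_mult[OF EuA EuA]] ch_mult[OF ch EuA EuA] u(3) by simp
    moreover have "u b \<noteq> 0" using b by (auto simp: K_def)
    then have "g b \<noteq> 0" using False by (simp add: g_def right_diff_distrib[symmetric])
    ultimately show ?thesis using gC by blast
  next
    case True
    obtain h where h: "h \<in> C0 B" "\<phi> (E h) \<noteq> h b" using H b by (auto simp: K_def)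
    define g where "g = (\<lambda>b. h b - \<phi> (E h) * u b)"
    have gC: "g \<in> C0 B" unfolding g_def by (intro C0_diff C0_scale u(1) h(1))
    have "E g = (\<lambda>x. E h x - \<phi> (E h) * E u x)" by (auto simp: g_def E_def fun_eq_iff)
    then have "\<phi> (E g) = 0" using ch_diff[OF ch E_HX[OF h(1)] HX_scale[OF EuA]] ch_scale[OF ch EuA] u(3) by simp
    moreover have "g b \<noteq> 0" using True h(2) by (simp add: g_def)
    ultimately show ?thesis using gC by blast
  qed
  then obtain G where G: "\<And>b. b \<in> K \<Longrightarrow> G b \<in> C0 B \<and> \<phi> (E (G b)) = 0 \<and> G b b \<noteq> 0" by metis
  define Op where "Op = (\<lambda>b. {b' \<in> topspace B. G b b' \<in> - {0}})"
  have Oo: "openin B (Op b)" if "b \<in> K" for b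
    unfolding Op_def by (rule openin_continuous_map_preimage[OF C0D(1)]) (use G[OF that] in auto)
  have Kcov: "K \<subseteq> \<Union> (Op ` K)"
    using G compactin_subset_topspace[OF K] by (auto simp: Op_def)
  obtain V where V: "finite V" "V \<subseteq> Op ` K" "K \<subseteq> \<Union> V"
    using K Oo Kcov unfolding compactin_def by (metis (no_types, lifting) imageE)
  obtain F where F: "F \<subseteq> K" "finite F" "V = Op ` F" using finite_subset_image[OF V(1,2)] by blast
  define s where "s = (\<lambda>b'. \<Sum>b\<in>F. G b b' * cnj (G b b'))"
  have sC: "s \<in> C0 B" unfolding s_def
  proof (rule C0_sum[OF F(2)])
    fix b assume "b \<in> F"
    then have "G b \<in> C0 B" using G F(1) by blast
    then show "(\<lambda>b'. G b b' * cnj (G b b')) \<in> C0 B" by (intro C0_mult C0_cnj)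
  qed
  have Es: "E s = (\<lambda>x. \<Sum>b\<in>F. E (G b) x * E (\<lambda>b'. cnj (G b b')) x)"
    by (auto simp: s_def E_def fun_eq_iff)
  have phis: "\<phi> (E s) = 0"
  proof -
    have "\<phi> (E s) = (\<Sum>b\<in>F. \<phi> (E (G b)) * \<phi> (E (\<lambda>b'. cnj (G b b'))))"
      unfolding Es
      using F G by (subst ch_sum[OF ch F(2)]) (auto intro!: sum.cong ch_mult[OF ch] HX_mult E_HX C0_cnj)
    also have "\<dots> = 0" using F G by (auto intro!: sum.neutral)
    finally show ?thesis .
  qed
  have sRe: "s b' = complex_of_real (\<Sum>b\<in>F. (norm (G b b'))^2)" for b'
    unfolding s_def of_real_sum complex_norm_square by simp
  have sc: "continuous_map B euclideanreal (\<lambda>b'. Re (s b'))"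
    using C0D(1)[OF sC] continuous_map_compose[of B euclidean s euclideanreal Re]
    by (simp add: o_def continuous_on_Re continuous_on_id)
  have spos: "Re (s b') > 0" if b': "b' \<in> K" for b'
  proof -
    obtain b where b: "b \<in> F" "b' \<in> Op b" using V(3) F(3) b' by auto
    have "G b b' \<noteq> 0" using b by (auto simp: Op_def)
    then have p1: "(norm (G b b'))^2 > 0" by simp
    have p2: "(norm (G b b'))^2 \<le> (\<Sum>b\<in>F. (norm (G b b'))^2)"
      by (rule member_le_sum[OF b(1)]) (auto simp: F(2))
    have "(\<Sum>b\<in>F. (norm (G b b'))^2) > 0" using p1 p2 by linarith
    then show ?thesis by (simp only: sRe Re_complex_of_real)
  qed
  obtain \<delta> where \<delta>: "\<delta> > 0" "\<And>b. b \<in> K \<Longrightarrow> \<delta> \<le> Re (s b)"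
    using compact_pos_min[OF K sc spos] by blast
  define t where "t = (\<lambda>b. s b + (u b * u b - 2 * u b))"
  have tC: "t \<in> C0 B" unfolding t_def by (intro C0_add sC C0_diff C0_mult C0_scale u(1))
  have Et: "E t = (\<lambda>x. E s x + (E u x * E u x - 2 * E u x))" by (auto simp: t_def E_def fun_eq_iff)
  have "\<phi> (E t) = -1"
    unfolding Et using EuA E_HX[OF sC]
    by (simp add: ch_add[OF ch] ch_diff[OF ch] ch_mult[OF ch] ch_scale[OF ch] HX_mult HX_scale HX_diff phis u(3))
  then obtain x where x: "x \<in> topspace X" "norm (E t x - (-1)) < min \<delta> (1/4)"
    using keyL[OF ch E_HX[OF tC], of "min \<delta> (1/4)"] \<delta>(1) by auto
  define c where "c = r x"
  have c: "c \<in> topspace B" using rc x continuous_map_image_subset_topspace c_def by blast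
  have "E t x + 1 = s c + (u c - 1)^2" by (simp add: E_at[OF x(1)] t_def c_def power2_eq_square algebra_simps)
  then have "Re (s c) + (Re (u c) - 1)^2 \<le> norm (E t x - (-1))"
    using complex_Re_le_cmod[of "E t x + 1"] u(2)[of c] by (simp add: power2_eq_square)
  then have lt: "Re (s c) + (Re (u c) - 1)^2 < min \<delta> (1/4)" using x(2) by linarith
  have s0: "Re (s c) \<ge> 0" by (simp add: sRe sum_nonneg)
  have "(Re (u c) - 1)^2 < (1/2)^2" using lt s0 by (simp add: power2_eq_square)
  then have "\<bar>Re (u c) - 1\<bar> < 1/2" using abs_less_iff power2_less_imp_less
    by (metis abs_ge_zero power2_abs zero_le_divide_1_iff zero_le_numeral)
  then have "1/2 \<le> norm (u c)" using abs_Re_le_cmod[of "u c"] by linarith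
  then have "c \<in> K" using c by (simp add: K_def)
  then have "\<delta> \<le> Re (s c)" using \<delta>(2) by blast
  then show False using lt by (smt (verit) zero_le_power2)
qed

end

definition Fm where "Fm \<phi> = (SOME b. b \<in> topspace B \<and> (\<forall>h\<in>C0 B. \<phi> (E h) = h b))"

lemma Fm: assumes "\<phi> \<in> characters A"
  shows "Fm \<phi> \<in> topspace B" "\<And>h. h \<in> C0 B \<Longrightarrow> \<phi> (E h) = h (Fm \<phi>)"
proof -
  have "Fm \<phi> \<in> topspace B \<and> (\<forall>h\<in>C0 B. \<phi> (E h) = h (Fm \<phi>))"
    unfolding Fm_def by (rule someI_ex) (use point_exists[OF assms] in blast)
  then show "Fm \<phi> \<in> topspace B" "\<And>h. h \<in> C0 B \<Longrightarrow> \<phi> (E h) = h (Fm \<phi>)" by auto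
qed

lemma Fm_i: assumes x: "x \<in> topspace X" shows "Fm (betaB_i X B r x) = r x"
proof (rule point_unique)
  show "Fm (betaB_i X B r x) \<in> topspace B" by (rule Fm(1)[OF i_char[OF x]])
  show "r x \<in> topspace B" using rc x continuous_map_image_subset_topspace by blast
  fix h assume h: "h \<in> C0 B"
  show "h (Fm (betaB_i X B r x)) = h (r x)"
    using Fm(2)[OF i_char[OF x] h] i_apply[OF E_HX[OF h]] E_at[OF x] by simp
qed

end



lemma closedin_tsp_Inter:
  assumes "\<And>C. C \<in> \<C> \<Longrightarrow> closedin X C"
  shows "closedin X (topspace X \<inter> \<Inter>\<C>)"
proof (cases "\<C> = {}")
  case True then show ?thesis by simp
next
  case False then show ?thesis using assms by (intro closedin_Int closedin_Inter) auto
qed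

context bsp
begin

abbreviation "P \<equiv> product_topology (\<lambda>_. (euclidean :: complex topology)) A"
abbreviation "\<beta> \<equiv> betaB X B r"

lemma chars_tsp: "characters A \<subseteq> topspace P"
  using chD(1) by (auto simp: topspace_product_topology PiE_def)

lemma tsp_beta: "topspace \<beta> = characters A"
  using chars_tsp by (auto simp: betaB_def spectrum_top_def)

lemma projP: "f \<in> A \<Longrightarrow> continuous_map P euclidean (\<lambda>\<psi>. \<psi> f)"
  using continuous_map_product_projection[of f A "\<lambda>_. euclidean"] by simp

lemma proj: "f \<in> A \<Longrightarrow> continuous_map \<beta> euclidean (\<lambda>\<psi>. \<psi> f)"
  unfolding betaB_def spectrum_top_def by (rule continuous_map_from_subtopology[OF projP])

lemma Fm_cont: "continuous_map \<beta> B Fm"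
  unfolding continuous_map_def
proof (intro conjI allI impI)
  show "Fm \<in> topspace \<beta> \<rightarrow> topspace B" using Fm(1) tsp_beta by auto
  fix U assume U: "openin B U"
  show "openin \<beta> {\<phi> \<in> topspace \<beta>. Fm \<phi> \<in> U}"
  proof (subst openin_subopen, intro ballI)
    fix \<phi> assume "\<phi> \<in> {\<phi> \<in> topspace \<beta>. Fm \<phi> \<in> U}"
    then have ph: "\<phi> \<in> characters A" "Fm \<phi> \<in> U" using tsp_beta by auto
    obtain h where h: "h \<in> C0 B" "h (Fm \<phi>) = 1" "\<And>b. b \<notin> U \<Longrightarrow> h b = 0"
      using bump_ex[of "{Fm \<phi>}" U] U ph Fm(1)[OF ph(1)] by auto
    define T where "T = {\<psi> \<in> topspace \<beta>. \<psi> (E h) \<in> ball 1 (1/2)}"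
    have "openin \<beta> T" unfolding T_def
      by (rule openin_continuous_map_preimage[OF proj[OF E_HX[OF h(1)]]]) simp
    moreover have "\<phi> \<in> T" using Fm(2)[OF ph(1) h(1)] h(2) ph tsp_beta by (auto simp: T_def)
    moreover have "T \<subseteq> {\<phi> \<in> topspace \<beta>. Fm \<phi> \<in> U}"
    proof
      fix \<psi> assume "\<psi> \<in> T"
      then have ps: "\<psi> \<in> characters A" "\<psi> (E h) \<in> ball 1 (1/2)" using tsp_beta by (auto simp: T_def)
      then have "h (Fm \<psi>) \<noteq> 0" using Fm(2)[OF ps(1) h(1)] by auto
      then show "\<psi> \<in> {\<phi> \<in> topspace \<beta>. Fm \<phi> \<in> U}" using h(3) ps tsp_beta by auto
    qed
    ultimately show "\<exists>T. openin \<beta> T \<and> \<phi> \<in> T \<and> T \<subseteq> {\<phi> \<in> topspace \<beta>. Fm \<phi> \<in> U}" by blast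
  qed
qed

definition Mb :: "('a \<Rightarrow> complex) \<Rightarrow> real" where
  "Mb f = (SOME M. M \<ge> 0 \<and> (\<forall>x. norm (f x) \<le> M))"

lemma Mb: "f \<in> A \<Longrightarrow> Mb f \<ge> 0 \<and> (\<forall>x. norm (f x) \<le> Mb f)"
  unfolding Mb_def by (rule someI_ex) (use Cb_bound[OF HXD(1)] in metis)

lemma S_compact:
  assumes h: "h \<in> C0 B"
  shows "compactin \<beta> (characters A \<inter> {\<psi>. 1/2 \<le> norm (\<psi> (E h))})"
proof -
  define S where "S = characters A \<inter> {\<psi>. 1/2 \<le> norm (\<psi> (E h))}"
  define Ks where "Ks = (\<lambda>(f,g) \<psi>. \<psi> (\<lambda>x. f x + g x) - \<psi> f - \<psi> g) ` (A \<times> A)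
     \<union> (\<lambda>(f,c) \<psi>. \<psi> (\<lambda>x. c * f x) - c * \<psi> f) ` (A \<times> UNIV)
     \<union> (\<lambda>(f,g) \<psi>. \<psi> (\<lambda>x. f x * g x) - \<psi> f * \<psi> g) ` (A \<times> A)"
  have Kc: "continuous_map P euclidean k" if "k \<in> Ks" for k
    using that unfolding Ks_def
    by (auto intro!: continuous_map_diff projP HX_add HX_scale HX_mult cm_mult simp: case_prod_beta)
  define \<C> where "\<C> = insert {\<psi> \<in> topspace P. \<psi> (E h) \<in> {z. 1/2 \<le> norm z}}
                     ((\<lambda>k. {\<psi> \<in> topspace P. k \<psi> \<in> {0}}) ` Ks)"
  have Cc: "closedin P C" if "C \<in> \<C>" for C
  proof -
    have cl0: "closed {z::complex. 1/2 \<le> norm z}"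
      by (rule closed_Collect_le[OF continuous_on_const continuous_on_norm_id])
    have "closedin P {\<psi> \<in> topspace P. \<psi> (E h) \<in> {z. 1/2 \<le> norm z}}"
      by (rule closedin_continuous_map_preimage[OF projP[OF E_HX[OF h]]]) (use cl0 in simp)
    moreover have "closedin P {\<psi> \<in> topspace P. k \<psi> \<in> {0}}" if "k \<in> Ks" for k
      by (rule closedin_continuous_map_preimage[OF Kc[OF that]]) simp
    ultimately show ?thesis using that by (auto simp: \<C>_def)
  qed
  have Seq: "S = topspace P \<inter> \<Inter>\<C>"
  proof
    show "S \<subseteq> topspace P \<inter> \<Inter>\<C>"
    proof
      fix \<psi> assume "\<psi> \<in> S"
      then have ps: "\<psi> \<in> characters A" "1/2 \<le> norm (\<psi> (E h))" by (auto simp: S_def)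
      then show "\<psi> \<in> topspace P \<inter> \<Inter>\<C>" using chars_tsp
        by (auto simp: \<C>_def Ks_def ch_add ch_scale ch_mult)
    qed
    show "topspace P \<inter> \<Inter>\<C> \<subseteq> S"
    proof
      fix \<psi> assume ps: "\<psi> \<in> topspace P \<inter> \<Inter>\<C>"
      have ext: "\<psi> \<in> extensional A" using ps by (auto simp: topspace_product_topology PiE_def)
      have nrm: "1/2 \<le> norm (\<psi> (E h))" using ps by (auto simp: \<C>_def)
      have kz: "k \<psi> = 0" if "k \<in> Ks" for k using ps that by (auto simp: \<C>_def)
      have add: "\<psi> (\<lambda>x. f x + g x) = \<psi> f + \<psi> g" if "f \<in> A" "g \<in> A" for f g
      proof -
        have "(\<lambda>\<psi>. \<psi> (\<lambda>x. f x + g x) - \<psi> f - \<psi> g) \<in> Ks" unfolding Ks_def using that by force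
        from kz[OF this] show ?thesis by (simp add: algebra_simps)
      qed
      have scl: "\<psi> (\<lambda>x. c * f x) = c * \<psi> f" if "f \<in> A" for f c
      proof -
        have "(\<lambda>\<psi>. \<psi> (\<lambda>x. c * f x) - c * \<psi> f) \<in> Ks" unfolding Ks_def using that by force
        from kz[OF this] show ?thesis by (simp add: algebra_simps)
      qed
      have mul: "\<psi> (\<lambda>x. f x * g x) = \<psi> f * \<psi> g" if "f \<in> A" "g \<in> A" for f g
      proof -
        have "(\<lambda>\<psi>. \<psi> (\<lambda>x. f x * g x) - \<psi> f * \<psi> g) \<in> Ks" unfolding Ks_def using that by force
        from kz[OF this] show ?thesis by (simp add: algebra_simps)
      qed
      have "\<psi> \<in> characters A" unfolding characters_def
        using ext add scl mul nrm E_HX[OF h] by (auto intro!: bexI[of _ "E h"])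
      then show "\<psi> \<in> S" using nrm by (simp add: S_def)
    qed
  qed
  have Scl: "closedin P S" unfolding Seq by (rule closedin_tsp_Inter[OF Cc])
  have Sub: "S \<subseteq> PiE A (\<lambda>f. cball 0 (Mb f))"
  proof
    fix \<psi> assume "\<psi> \<in> S"
    then have ps: "\<psi> \<in> characters A" by (auto simp: S_def)
    have "norm (\<psi> f) \<le> Mb f" if "f \<in> A" for f
      using ch_bound[OF ps that] Mb[OF that] by blast
    then show "\<psi> \<in> PiE A (\<lambda>f. cball 0 (Mb f))" using chD(1)[OF ps] by (auto simp: PiE_def)
  qed
  have "compactin P (PiE A (\<lambda>f. cball 0 (Mb f)))"
    by (simp add: compactin_PiE)
  then have "compactin P S" using closed_compactin Sub Scl by blast
  then show ?thesis unfolding betaB_def spectrum_top_def compactin_subtopology S_def by auto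
qed

lemma Fm_proper: "proper_map \<beta> B Fm"
proof (rule compact_imp_proper_map)
  show "k_space B" by (rule locally_compact_imp_k_space[OF lcB])
  show "kc_space B" by (rule Hausdorff_imp_kc_space[OF HB])
  show "Fm \<in> topspace \<beta> \<rightarrow> topspace B" using Fm(1) tsp_beta by auto
  show "continuous_map \<beta> B Fm \<or> kc_space \<beta>" using Fm_cont by blast
  fix K assume K: "compactin B K"
  obtain h where h: "h \<in> C0 B" "\<And>b. b \<in> K \<Longrightarrow> h b = 1"
    using bump_ex[OF K openin_topspace compactin_subset_topspace[OF K]] by blast
  have cl: "closedin \<beta> {x \<in> topspace \<beta>. Fm x \<in> K}"
    by (rule closedin_continuous_map_preimage[OF Fm_cont compactin_imp_closedin[OF HB K]])
  have "{x \<in> topspace \<beta>. Fm x \<in> K} \<subseteq> characters A \<inter> {\<psi>. 1/2 \<le> norm (\<psi> (E h))}"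
  proof
    fix \<psi> assume "\<psi> \<in> {x \<in> topspace \<beta>. Fm x \<in> K}"
    then have ps: "\<psi> \<in> characters A" "Fm \<psi> \<in> K" using tsp_beta by auto
    then have "\<psi> (E h) = 1" using Fm(2)[OF ps(1) h(1)] h(2) by simp
    then show "\<psi> \<in> characters A \<inter> {\<psi>. 1/2 \<le> norm (\<psi> (E h))}" using ps by simp
  qed
  then show "compactin \<beta> {x \<in> topspace \<beta>. Fm x \<in> K}"
    using closed_compactin[OF S_compact[OF h(1)] _ cl] by blast
qed

end



context bsp
begin

lemma density:
  assumes ch: "\<phi> \<in> characters A" and J: "finite J" "J \<subseteq> A" and e: "\<epsilon> > 0"
  shows "\<exists>x\<in>topspace X. \<forall>f\<in>J. norm (f x - \<phi> f) < \<epsilon>"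
proof -
  obtain u0 where u0: "u0 \<in> A" "\<phi> u0 \<noteq> 0" using chD(5)[OF ch] by blast
  define u1 where "u1 = (\<lambda>x. inverse (\<phi> u0) * u0 x)"
  have u1: "u1 \<in> A" "\<phi> u1 = 1" using u0 HX_scale ch_scale[OF ch] by (auto simp: u1_def)
  define u where "u = (\<lambda>x. complex_of_real (Re (u1 x)))"
  have uA: "u \<in> A" and u1': "\<phi> u = 1" using ch_Re[OF ch u1(1)] u1(2) by (auto simp: u_def)
  have ure: "\<And>x. u x = complex_of_real (Re (u x))" by (simp add: u_def)
  have uim: "\<And>x. Im (u x) = 0" by (simp add: u_def)
  define p where "p = (\<lambda>f x. f x - \<phi> f * u x)"
  have pA: "p f \<in> A" if "f \<in> A" for f unfolding p_def by (intro HX_diff HX_scale that uA)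
  have p0: "\<phi> (p f) = 0" if "f \<in> A" for f
    unfolding p_def using ch_diff[OF ch that HX_scale[OF uA]] ch_scale[OF ch uA] u1' by simp
  define a where "a = (\<lambda>x. \<Sum>f\<in>J. p f x * cnj (p f x))"
  have aA: "a \<in> A" unfolding a_def using J by (intro HX_sum HX_mult HX_cnj pA) auto
  have a0: "\<phi> a = 0"
  proof -
    have "\<phi> a = (\<Sum>f\<in>J. \<phi> (p f) * \<phi> (\<lambda>x. cnj (p f x)))"
      unfolding a_def using J
      by (subst ch_sum[OF ch J(1)]) (auto intro!: sum.cong ch_mult[OF ch] HX_mult HX_cnj pA)
    also have "\<dots> = 0" using J p0 by (auto intro!: sum.neutral)
    finally show ?thesis .
  qed
  have are: "a x = complex_of_real (\<Sum>f\<in>J. (norm (p f x))^2)" for x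
    unfolding a_def of_real_sum complex_norm_square by simp
  define b where "b = (\<lambda>x. a x + (u x * u x - 2 * u x))"
  have bA: "b \<in> A" unfolding b_def by (intro HX_add aA HX_diff HX_mult HX_scale uA)
  have b1: "\<phi> b = -1" unfolding b_def using aA uA
    by (simp add: ch_add[OF ch] ch_diff[OF ch] ch_mult[OF ch] ch_scale[OF ch] HX_mult HX_scale HX_diff a0 u1')
  define C where "C = (\<Sum>f\<in>J. norm (\<phi> f))"
  have C0: "C \<ge> 0" by (simp add: C_def sum_nonneg)
  define \<delta> where "\<delta> = \<epsilon> / (C + 1)"
  have \<delta>: "\<delta> > 0" using e C0 by (simp add: \<delta>_def)
  obtain x where x: "x \<in> topspace X" "norm (b x - \<phi> b) < \<delta>^2"
    using keyL[OF ch bA, of "\<delta>^2"] b1 \<delta> by auto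
  have "b x - \<phi> b = a x + (u x - 1)^2" using b1 by (simp add: b_def power2_eq_square algebra_simps)
  then have "(\<Sum>f\<in>J. (norm (p f x))^2) + (Re (u x) - 1)^2 \<le> norm (b x - \<phi> b)"
    using complex_Re_le_cmod[of "b x - \<phi> b"] are[of x] uim[of x]
    by (simp add: power2_eq_square)
  then have lt: "(\<Sum>f\<in>J. (norm (p f x))^2) + (Re (u x) - 1)^2 < \<delta>^2" using x(2) by linarith
  have sn: "(\<Sum>f\<in>J. (norm (p f x))^2) \<ge> 0" by (simp add: sum_nonneg)
  have "(Re (u x) - 1)^2 < \<delta>^2" using lt sn by linarith
  then have "\<bar>Re (u x) - 1\<bar>^2 < \<delta>^2" by simp
  then have ab: "\<bar>Re (u x) - 1\<bar> < \<delta>" using power2_less_imp_less[of "\<bar>Re (u x) - 1\<bar>" \<delta>] \<delta> by simp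
  have "u x - 1 = complex_of_real (Re (u x) - 1)" using ure[of x] by (metis of_real_1 of_real_diff)
  then have ud: "norm (u x - 1) < \<delta>" using ab by (simp only: norm_of_real)
  show ?thesis
  proof (intro bexI[OF _ x(1)] ballI)
    fix f assume f: "f \<in> J"
    have "(norm (p f x))^2 \<le> (\<Sum>f\<in>J. (norm (p f x))^2)"
      by (rule member_le_sum[OF f]) (auto simp: J(1))
    then have "(norm (p f x))^2 < \<delta>^2" using lt zero_le_power2[of "Re (u x) - 1"] by linarith
    then have pd: "norm (p f x) < \<delta>" using power2_less_imp_less[of "norm (p f x)" \<delta>] \<delta> by simp
    have "f x - \<phi> f = p f x + \<phi> f * (u x - 1)" by (simp add: p_def algebra_simps)
    then have "norm (f x - \<phi> f) \<le> norm (p f x) + norm (\<phi> f) * norm (u x - 1)"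
      by (metis norm_mult norm_triangle_ineq)
    also have "\<dots> \<le> norm (p f x) + norm (\<phi> f) * \<delta>"
      using ud by (intro add_left_mono mult_left_mono) auto
    also have "\<dots> < \<delta> + C * \<delta>"
    proof -
      have "norm (\<phi> f) \<le> C" unfolding C_def by (rule member_le_sum[OF f]) (auto simp: J(1))
      then have "norm (\<phi> f) * \<delta> \<le> C * \<delta>" using \<delta> by (intro mult_right_mono) auto
      then show ?thesis using pd by linarith
    qed
    also have "\<dots> = (C + 1) * \<delta>" by (simp add: algebra_simps)
    also have "\<dots> = \<epsilon>" using C0 by (simp add: \<delta>_def)
    finally show "norm (f x - \<phi> f) < \<epsilon>" .
  qed
qed

lemma dense_i:
  assumes ch: "\<phi> \<in> characters A" and W: "openin \<beta> W" and ph: "\<phi> \<in> W"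
  shows "\<exists>x\<in>topspace X. betaB_i X B r x \<in> W"
proof -
  obtain T where T: "openin P T" "W = T \<inter> characters A"
    using W unfolding betaB_def spectrum_top_def openin_subtopology by blast
  have phT: "\<phi> \<in> T" using ph T(2) by blast
  have "\<exists>U. finite {f \<in> A. U f \<noteq> topspace euclidean} \<and> (\<forall>f\<in>A. openin euclidean (U f)) \<and>
    \<phi> \<in> PiE A U \<and> PiE A U \<subseteq> T"
    using T(1) phT unfolding openin_product_topology_alt by (rule bspec)
  then obtain U where U: "finite {f \<in> A. U f \<noteq> topspace euclidean}" "\<And>f. f \<in> A \<Longrightarrow> openin euclidean (U f)"
    "\<phi> \<in> PiE A U" "PiE A U \<subseteq> (T :: (('a \<Rightarrow> complex) \<Rightarrow> complex) set)"
    by blast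
  define J where "J = {f \<in> A. U f \<noteq> UNIV}"
  have J: "finite J" "J \<subseteq> A" using U(1) by (auto simp: J_def)
  have "\<exists>e>0. ball (\<phi> f) e \<subseteq> U f" if "f \<in> A" for f
  proof -
    have "open (U f)" using U(2)[OF that] by simp
    moreover have "\<phi> f \<in> U f" using U(3) that by (simp add: PiE_iff)
    ultimately show ?thesis by (simp add: open_contains_ball)
  qed
  then obtain ee where ee: "\<And>f. f \<in> A \<Longrightarrow> ee f > 0 \<and> ball (\<phi> f) (ee f) \<subseteq> U f" by metis
  define \<epsilon> where "\<epsilon> = Min (insert 1 (ee ` J))"
  have e: "\<epsilon> > 0" unfolding \<epsilon>_def
  proof (subst Min_gr_iff)
    show "\<forall>a\<in>insert 1 (ee ` J). 0 < a" using J ee by auto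
  qed (use J in auto)
  have eJ: "\<epsilon> \<le> ee f" if "f \<in> J" for f unfolding \<epsilon>_def by (rule Min_le) (use J that in auto)
  obtain x where x: "x \<in> topspace X" "\<And>f. f \<in> J \<Longrightarrow> norm (f x - \<phi> f) < \<epsilon>"
    using density[OF ch J e] by blast
  have "betaB_i X B r x \<in> PiE A U"
  proof (simp add: PiE_iff, intro conjI ballI)
    fix f assume f: "f \<in> A"
    show "betaB_i X B r x f \<in> U f"
    proof (cases "f \<in> J")
      case True
      have "dist (\<phi> f) (f x) < ee f" using x(2)[OF True] eJ[OF True] by (simp add: dist_norm norm_minus_commute)
      then show ?thesis using ee[OF f] i_apply[OF f] by auto
    next
      case False then show ?thesis using f by (simp add: J_def)
    qed
  next
    show "betaB_i X B r x \<in> extensional A" by (simp add: betaB_i_def)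
  qed
  then show ?thesis using x(1) U(4) T(2) i_char[OF x(1)] by blast
qed

lemma unique:
  assumes G: "continuous_map \<beta> B G" and Gi: "\<And>x. x \<in> topspace X \<Longrightarrow> G (betaB_i X B r x) = r x"
    and p: "p \<in> topspace \<beta>"
  shows "G p = Fm p"
proof (rule ccontr)
  assume ne: "G p \<noteq> Fm p"
  have ch: "p \<in> characters A" using p tsp_beta by simp
  have Gp: "G p \<in> topspace B" using G p continuous_map_image_subset_topspace by blast
  have "openin B (topspace B - {Fm p})" using closedin_Hausdorff_singleton[OF HB Fm(1)[OF ch]] by blast
  then have "\<exists>h\<in>C0 B. (\<forall>b. Im (h b) = 0 \<and> 0 \<le> Re (h b) \<and> Re (h b) \<le> 1) \<and> (\<forall>b\<in>{G p}. h b = 1) \<and> (\<forall>b. b \<notin> topspace B - {Fm p} \<longrightarrow> h b = 0)"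
    using Gp ne by (intro bump_ex) auto
  then obtain h where h: "h \<in> C0 B" "h (G p) = 1" "h (Fm p) = 0" by blast
  define N1 where "N1 = {\<psi> \<in> topspace \<beta>. (h \<circ> G) \<psi> \<in> ball 1 (1/2)}"
  define N2 where "N2 = {\<psi> \<in> topspace \<beta>. \<psi> (E h) \<in> ball 0 (1/2)}"
  have o1: "openin \<beta> N1" unfolding N1_def
    by (rule openin_continuous_map_preimage[OF continuous_map_compose[OF G C0D(1)[OF h(1)]]]) simp
  have o2: "openin \<beta> N2" unfolding N2_def
    by (rule openin_continuous_map_preimage[OF proj[OF E_HX[OF h(1)]]]) simp
  have "p (E h) = 0" using Fm(2)[OF ch h(1)] h(3) by simp
  then have "p \<in> N1 \<inter> N2" using p h(2) by (simp add: N1_def N2_def)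
  then obtain x where x: "x \<in> topspace X" "betaB_i X B r x \<in> N1 \<inter> N2"
    using dense_i[OF ch openin_Int[OF o1 o2]] by blast
  have "h (r x) \<in> ball 1 (1/2)" using x Gi[OF x(1)] by (simp add: N1_def)
  moreover have "h (r x) \<in> ball 0 (1/2)"
    using x i_apply[OF E_HX[OF h(1)]] E_at[OF x(1)] by (simp add: N2_def)
  ultimately have a1: "h (r x) \<in> ball 1 (1/2)" and b1: "h (r x) \<in> ball 0 (1/2)" by auto
  have d1: "norm (1 - h (r x)) < 1/2" using a1 by (simp add: dist_norm)
  have d2: "norm (h (r x)) < 1/2" using b1 by simp
  have "norm (1::complex) \<le> norm (1 - h (r x)) + norm (h (r x))"
    using norm_triangle_ineq[of "1 - h (r x)" "h (r x)"] by simp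
  moreover have "norm (1::complex) = 1" by simp
  ultimately show False using d1 d2 by linarith
qed

lemma uniq2:
  assumes "continuous_map \<beta> B F" "\<forall>x\<in>topspace X. F (betaB_i X B r x) = r x"
    "continuous_map \<beta> B G" "\<forall>x\<in>topspace X. G (betaB_i X B r x) = r x"
    "q \<in> topspace \<beta>"
  shows "F q = G q"
proof -
  have "F q = Fm q" using assms(1,2,5) unique by blast
  moreover have "G q = Fm q" using assms(3,4,5) unique by blast
  ultimately show ?thesis by simp
qed

lemma exF: "\<exists>F. continuous_map \<beta> B F \<and> proper_map \<beta> B F \<and> (\<forall>x\<in>topspace X. F (betaB_i X B r x) = r x)"
  using Fm_cont Fm_proper Fm_i by blast

end

theorem corollary4p9:
  fixes X :: "'a topology" and B :: "'b topology" and r :: "'a \<Rightarrow> 'b"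
  assumes "locally_compact_space B" and "Hausdorff_space B"
    and "continuous_map X B r"
  shows "(\<exists>F. continuous_map (betaB X B r) B F \<and> proper_map (betaB X B r) B F \<and>
              (\<forall>x\<in>topspace X. F (betaB_i X B r x) = r x))
       \<and> (\<forall>F G. continuous_map (betaB X B r) B F \<and> proper_map (betaB X B r) B F \<and>
              (\<forall>x\<in>topspace X. F (betaB_i X B r x) = r x) \<and>
              continuous_map (betaB X B r) B G \<and> proper_map (betaB X B r) B G \<and>
              (\<forall>x\<in>topspace X. G (betaB_i X B r x) = r x)
              \<longrightarrow> (\<forall>p\<in>topspace (betaB X B r). F p = G p))"
proof -
  have L: "bsp X B r" by (rule bsp.intro[OF assms])
  show ?thesis
    using bsp.exF[OF L] bsp.uniq2[OF L] by blast
qed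


end
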